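(* Let $0<\alpha<1$. Let $(x(t))_{t\ge 0}$ be a sequence of nonnegative reals (attempt rates of a station) and $(\bar{x}(t))_{t\ge0}$ a sequence of positive reals (fair attempt rates). Define $p(0)=0$ and, for $t\ge 0$, $$p(t+1)=\max\Big(0,\; p(t)+\alpha\Big(\tfrac{x(t)}{\bar{x}(t)}-1\Big)\Big),\qquad P_{NACK}(t)=\min\{p(t),1\}.$$ Suppose the normalised attempt rate depends on the acknowledgement-suppression probability through a function $h:[0,1]\to\mathbb{R}$, i.e. $x(t)/\bar{x}(t)=h(P_{NACK}(t))$ for all $t$, where: (i) $h(0)>1$; (ii) $h(1)<1$; (iii) $h$ is strictly decreasing and Lipschitz with a Lipschitz constant smaller than $2/\alpha$. Then the algorithm converges to a point where $x(t)=\bar{x}(t)$; that is, $p(t)\to P$ where $P$ is the unique point of $[0,1]$ with $h(P)=1$, and hence $x(t)/\bar{x}(t)\to 1$.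
   Context: $p(t)$ is the accumulated penalty of a (moderately misbehaving) station under an access-point policing algorithm, and $P_{NACK}(t)$ is the probability with which the access point suppresses acknowledgements of that station's frames at step $t$. *)

theory Defs
  imports "HOL-Analysis.Analysis"
begin

end

theory Submission
  imports Defs
begin

theorem theorem2:
  fixes \<alpha> :: real and x xbar p :: "nat \<Rightarrow> real" and h :: "real \<Rightarrow> real" and L :: real
  assumes alpha: "0 < \<alpha>" "\<alpha> < 1"
    and x_nonneg: "\<And>t. x t \<ge> 0"
    and xbar_pos: "\<And>t. xbar t > 0"
    and p0: "p 0 = 0"
    and p_step: "\<And>t. p (Suc t) = max 0 (p t + \<alpha> * (x t / xbar t - 1))"
    and resp: "\<And>t. x t / xbar t = h (min (p t) 1)"
    and h0: "h 0 > 1"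
    and h1: "h 1 < 1"
    and h_dec: "strict_antimono_on {0..1} h"
    and h_lip: "L-lipschitz_on {0..1} h"
    and L_bound: "L < 2 / \<alpha>"
  shows "\<exists>P. P \<in> {0..1} \<and> h P = 1 \<and> (\<forall>Q\<in>{0..1}. h Q = 1 \<longrightarrow> Q = P)
            \<and> p \<longlonglongrightarrow> P \<and> (\<lambda>t. x t / xbar t) \<longlonglongrightarrow> 1"
proof -
  have dec: "h s < h r" if "r \<in> {0..1}" "s \<in> {0..1}" "r < s" for r s
    using monotone_onD[OF h_dec that] .
  have le: "h s \<le> h r" if "r \<in> {0..1}" "s \<in> {0..1}" "r \<le> s" for r s
    using dec[OF that(1,2)] that by (cases "r = s") auto
  have lip: "\<bar>h a - h b\<bar> \<le> L * \<bar>a - b\<bar>" if "a \<in> {0..1}" "b \<in> {0..1}" for a b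
    using lipschitz_onD[OF h_lip that] by (simp add: dist_real_def)
  have L0: "0 \<le> L" using lipschitz_on_nonneg[OF h_lip] .
  have aL: "\<alpha> * L < 2" using L_bound alpha by (simp add: field_simps)
  have cont: "continuous_on {0..1} h" using lipschitz_on_continuous_on[OF h_lip] .
  obtain P where P: "0 \<le> P" "P \<le> 1" "h P = 1"
    using IVT2'[of h 1 1 0, OF _ _ _ cont] h0 h1 by force
  have Ppos: "0 < P" using P h0 by (cases "P = 0") auto
  have Plt: "P < 1" using P h1 by (cases "P = 1") auto
  have uniq: "\<forall>Q\<in>{0..1}. h Q = 1 \<longrightarrow> Q = P"
  proof (intro ballI impI)
    fix Q assume Q: "Q \<in> {0..1}" "h Q = 1"
    show "Q = P"
    proof (rule ccontr)
      assume "Q \<noteq> P"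
      then consider "Q < P" | "P < Q" by linarith
      then show False using dec[of Q P] dec[of P Q] Q P by auto
    qed
  qed
  define V where "V t = \<bar>p t - P\<bar>" for t
  have pnn: "p t \<ge> 0" for t by (cases t) (auto simp: p0 p_step)
  have step: "\<bar>p (Suc t) - P\<bar> \<le> \<bar>p t - P\<bar> - \<delta>"
    if d0: "0 \<le> \<delta>" and dc: "\<delta> \<le> (2 - \<alpha> * L) * c"
      and c: "c \<le> \<bar>p t - P\<bar>"
      and m1: "p t < P \<Longrightarrow> \<delta> \<le> \<alpha> * (h (p t) - 1)"
      and m2: "p t > P \<Longrightarrow> \<delta> \<le> \<alpha> * (1 - h (min (p t) 1))"
    for t \<delta> c
  proof -
    let ?q = "min (p t) 1"
    have q01: "?q \<in> {0..1}" using pnn[of t] by auto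
    have y: "\<bar>p t + \<alpha> * (h ?q - 1) - P\<bar> \<le> \<bar>p t - P\<bar> - \<delta>"
    proof (cases "p t < P")
      case True
      have q: "?q = p t" using True Plt by auto
      have e0: "h (p t) - 1 \<le> L * (P - p t)"
        using lip[of "p t" P] q01 q P True by auto
      have "\<alpha> * (h (p t) - 1) \<le> \<alpha> * L * (P - p t)"
        using mult_left_mono[OF e0, of \<alpha>] alpha by (simp add: algebra_simps)
      moreover have "(2 - \<alpha> * L) * c \<le> (2 - \<alpha> * L) * (P - p t)"
        using c True aL by (intro mult_left_mono) auto
      ultimately show ?thesis using m1[OF True] True dc q by (simp add: abs_if algebra_simps)
    next
      case False
      show ?thesis
      proof (cases "p t = P")
        case True
        then have "c \<le> 0" using c by simp
        then have "(2 - \<alpha> * L) * c \<le> 0" using aL by (intro mult_nonneg_nonpos) auto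
        then have "\<delta> \<le> 0" using dc by linarith
        then show ?thesis using True P by (simp add: min_def)
      next
        case False2: False
        have gt: "p t > P" using False False2 by auto
        have qP: "P \<le> ?q" using gt P by auto
        have e0: "1 - h ?q \<le> L * (?q - P)"
          using lip[of ?q P] q01 P qP by auto
        have "L * (?q - P) \<le> L * (p t - P)" using L0 by (intro mult_left_mono) auto
        with e0 have e1: "\<alpha> * (1 - h ?q) \<le> \<alpha> * L * (p t - P)"
          using mult_left_mono[of "1 - h ?q" "L * (p t - P)" \<alpha>] alpha by (simp add: algebra_simps)
        moreover have "(2 - \<alpha> * L) * c \<le> (2 - \<alpha> * L) * (p t - P)"
          using c gt aL by (intro mult_left_mono) auto
        ultimately show ?thesis using m2[OF gt] gt dc by (simp add: abs_if algebra_simps)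
      qed
    qed
    have "\<bar>p (Suc t) - P\<bar> \<le> \<bar>p t + \<alpha> * (h ?q - 1) - P\<bar>"
      using P by (simp add: p_step resp abs_if max_def)
    with y show ?thesis by linarith
  qed
  have mono: "V (Suc t) \<le> V t" for t
  proof -
    have "0 \<le> \<alpha> * (h (p t) - 1)" if "p t < P"
      using le[of "p t" P] pnn[of t] that P alpha by auto
    moreover have "0 \<le> \<alpha> * (1 - h (min (p t) 1))" if "p t > P"
      using le[of P "min (p t) 1"] pnn[of t] that P alpha by auto
    ultimately show ?thesis unfolding V_def using step[of 0 0 t] aL by auto
  qed
  have Vmono: "V n \<le> V m" if "m \<le> n" for m n
    using that
  proof (induction n rule: dec_induct)
    case (step n) then show ?case using mono[of n] by linarith
  qed simp
  have small: "\<exists>t. V t < \<epsilon>" if eps: "\<epsilon> > 0" for \<epsilon>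
  proof (rule ccontr)
    assume "\<not> ?thesis"
    then have big: "\<epsilon> \<le> V t" for t by (simp add: not_less)
    define m1 where "m1 = \<alpha> * (h (max (P - \<epsilon>) 0) - 1)"
    define m2 where "m2 = \<alpha> * (1 - h (min (P + \<epsilon>) 1))"
    define \<delta> where "\<delta> = min m1 (min m2 ((2 - \<alpha> * L) * \<epsilon>))"
    have "h (max (P - \<epsilon>) 0) > h P" using dec[of "max (P - \<epsilon>) 0" P] P Ppos eps by auto
    then have m1p: "m1 > 0" using P alpha by (simp add: m1_def)
    have "h (min (P + \<epsilon>) 1) < h P" using dec[of P "min (P + \<epsilon>) 1"] P Plt eps by auto
    then have m2p: "m2 > 0" using P alpha by (simp add: m2_def)
    have dp: "\<delta> > 0" using m1p m2p aL eps by (simp add: \<delta>_def)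
    have stepd: "V (Suc t) \<le> V t - \<delta>" for t
      unfolding V_def
    proof (rule step[of \<delta> \<epsilon>])
      show "0 \<le> \<delta>" using dp by simp
      show "\<delta> \<le> (2 - \<alpha> * L) * \<epsilon>" by (simp add: \<delta>_def)
      show "\<epsilon> \<le> \<bar>p t - P\<bar>" using big[of t] by (simp add: V_def)
      show "\<delta> \<le> \<alpha> * (h (p t) - 1)" if lt: "p t < P"
      proof -
        have "p t \<le> P - \<epsilon>" using big[of t] lt by (simp add: V_def)
        then have a3: "p t \<le> max (P - \<epsilon>) 0" by simp
        have a2: "max (P - \<epsilon>) 0 \<in> {0..1}" using P eps by simp
        have a1: "p t \<in> {0..1}" using pnn[of t] \<open>p t \<le> P - \<epsilon>\<close> P eps by simp
        have "h (max (P - \<epsilon>) 0) \<le> h (p t)" by (rule le[OF a1 a2 a3])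
        then have "m1 \<le> \<alpha> * (h (p t) - 1)" using alpha unfolding m1_def
          by (intro mult_left_mono) auto
        then show ?thesis by (simp add: \<delta>_def)
      qed
      show "\<delta> \<le> \<alpha> * (1 - h (min (p t) 1))" if gt: "p t > P"
      proof -
        have "p t \<ge> P + \<epsilon>" using big[of t] gt by (simp add: V_def)
        then have b3: "min (P + \<epsilon>) 1 \<le> min (p t) 1" by simp
        have b1: "min (P + \<epsilon>) 1 \<in> {0..1}" using P eps by simp
        have b2: "min (p t) 1 \<in> {0..1}" using pnn[of t] by simp
        have "h (min (p t) 1) \<le> h (min (P + \<epsilon>) 1)" by (rule le[OF b1 b2 b3])
        then have "m2 \<le> \<alpha> * (1 - h (min (p t) 1))" using alpha unfolding m2_def
          by (intro mult_left_mono) auto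
        then show ?thesis by (simp add: \<delta>_def)
      qed
    qed
    have lin: "V t \<le> V 0 - real t * \<delta>" for t
    proof (induction t)
      case (Suc t) then show ?case using stepd[of t] by (simp add: algebra_simps)
    qed simp
    obtain n :: nat where n: "V 0 / \<delta> < real n" using reals_Archimedean2 by blast
    then have "V 0 < real n * \<delta>" using dp by (simp add: field_simps)
    then show False using lin[of n] big[of n] eps by linarith
  qed
  have pconv: "p \<longlonglongrightarrow> P"
  proof (rule LIMSEQ_I)
    fix r :: real assume r: "0 < r"
    obtain t0 where "V t0 < r" using small[OF r] by blast
    then have "\<forall>n\<ge>t0. norm (p n - P) < r"
    proof (intro allI impI)
      fix n assume "t0 \<le> n" "V t0 < r"
      then have "V n < r" using Vmono[of t0 n] by linarith
      then show "norm (p n - P) < r" by (simp add: V_def)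
    qed
    then show "\<exists>no. \<forall>n\<ge>no. norm (p n - P) < r" by blast
  qed
  have xconv: "(\<lambda>t. x t / xbar t) \<longlonglongrightarrow> 1"
  proof (rule LIMSEQ_I)
    fix r :: real assume r: "0 < r"
    obtain t0 where t0: "V t0 < r / (L + 1)" using small[of "r / (L + 1)"] r L0 by auto
    have "norm (x n / xbar n - 1) < r" if "n \<ge> t0" for n
    proof -
      have Vn: "V n < r / (L + 1)" using Vmono[OF that] t0 by linarith
      have q01: "min (p n) 1 \<in> {0..1}" using pnn[of n] by auto
      have "\<bar>min (p n) 1 - P\<bar> \<le> V n" using P pnn[of n] by (auto simp: V_def)
      have "\<bar>h (min (p n) 1) - 1\<bar> \<le> L * \<bar>min (p n) 1 - P\<bar>"
        using lip[OF q01, of P] P by auto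
      also have "\<dots> \<le> L * V n" using \<open>\<bar>min (p n) 1 - P\<bar> \<le> V n\<close> L0 by (rule mult_left_mono)
      also have "\<dots> \<le> (L + 1) * V n" using V_def by (simp add: algebra_simps)
      also have "\<dots> < r" using Vn L0 by (simp add: field_simps)
      finally show ?thesis by (simp add: resp)
    qed
    then show "\<exists>no. \<forall>n\<ge>no. norm (x n / xbar n - 1) < r" by blast
  qed
  have P01: "P \<in> {0..1}" using P by simp
  show ?thesis
    by (rule exI[of _ P]) (intro conjI P01 uniq pconv xconv P(3))
qed

end
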